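(* Let $A\in\mathbb{R}^{n\times n}$, $B\in\mathbb{R}^{n\times b}$, $C\in\mathbb{R}^{c\times n}$ with $(A,B)$ stabilizable and $(A,C)$ detectable. Let $X_\infty\in\mathbb{R}^{n\times n}$ be the unique symmetric positive semidefinite solution of the algebraic Riccati equation $0=A^TX+XA-XBB^TX+C^TC$, and let $q_1,\dots,q_n\in\mathbb{R}^n$ be an orthonormal system of eigenvectors of $X_\infty$ with corresponding eigenvalues $\lambda_1(X_\infty)\ge\dots\ge\lambda_n(X_\infty)$ (i.e. $X_\infty q_i=\lambda_i(X_\infty)q_i$). Let $X\colon[0,\infty)\to\mathbb{R}^{n\times n}$ be the unique solution of the differential Riccati equation $$\dot X(t)=A^TX(t)+X(t)A-X(t)BB^TX(t)+C^TC,\qquad X(0)=0.$$ Then for all $i,j=1,\dots,n$ and all $t\ge0$, $$|q_i^TX(t)q_j|\le\sqrt{\lambda_i(X_\infty)\,\lambda_j(X_\infty)}.$$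
   Context: $\lambda_k(\cdot)$ denotes the $k$-th largest eigenvalue of a real symmetric matrix. The differential Riccati equation with zero initial value has a unique solution on $[0,\infty)$. *)

theory Defs
  imports "HOL-Analysis.Analysis"
begin

definition cmat :: "real^'n^'m \<Rightarrow> complex^'n^'m" where
  "cmat M = (\<chi> i j. complex_of_real (M $ i $ j))"

definition hurwitz :: "real^'n^'n \<Rightarrow> bool" where
  "hurwitz M \<longleftrightarrow> (\<forall>(\<mu>::complex) (v::complex^'n). v \<noteq> 0 \<and> cmat M *v v = \<mu> *s v \<longrightarrow> Re \<mu> < 0)"

definition stabilizable :: "real^'n^'n \<Rightarrow> real^'b^'n \<Rightarrow> bool" where
  "stabilizable A B \<longleftrightarrow> (\<exists>K::real^'n^'b. hurwitz (A - B ** K))"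

definition detectable :: "real^'n^'n \<Rightarrow> real^'n^'c \<Rightarrow> bool" where
  "detectable A C \<longleftrightarrow> (\<exists>L::real^'c^'n. hurwitz (A - L ** C))"

definition psd :: "real^'n^'n \<Rightarrow> bool" where
  "psd M \<longleftrightarrow> (\<forall>v. 0 \<le> v \<bullet> (M *v v))"

definition riccati_rhs :: "real^'n^'n \<Rightarrow> real^'b^'n \<Rightarrow> real^'n^'c \<Rightarrow> real^'n^'n \<Rightarrow> real^'n^'n" where
  "riccati_rhs A B C X = transpose A ** X + X ** A - X ** B ** transpose B ** X + transpose C ** C"

end

theory Submission
  imports Defs
begin


lemma tr_add: "transpose (A + B) = transpose A + (transpose B :: 'a::semiring_1^'n^'m)"
  by (simp add: transpose_def vec_eq_iff)
lemma tr_diff: "transpose (A - B) = transpose A - (transpose B :: 'a::ring_1^'n^'m)"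
  by (simp add: transpose_def vec_eq_iff)
lemma tr_scaleR: "transpose (r *\<^sub>R A) = r *\<^sub>R (transpose A :: real^'n^'m)"
  by (simp add: transpose_def vec_eq_iff)
lemma mm_radd: "(A + B) ** C = A ** C + B ** (C :: 'a::semiring_1^'n^'m)"
  by (simp add: matrix_matrix_mult_def vec_eq_iff distrib_right sum.distrib)
lemma mm_rdiff: "(A - B) ** C = A ** C - B ** (C :: 'a::ring_1^'n^'m)"
  by (simp add: matrix_matrix_mult_def vec_eq_iff left_diff_distrib sum_subtractf)
lemma mm_ldiff: "C ** (A - B) = C ** A - C ** (B :: 'a::ring_1^'n^'m)"
  by (simp add: matrix_matrix_mult_def vec_eq_iff right_diff_distrib sum_subtractf)
lemma mm_rscale: "(r *\<^sub>R A) ** C = r *\<^sub>R (A ** (C :: real^'n^'m))"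
  by (simp add: matrix_matrix_mult_def vec_eq_iff sum_distrib_left mult.assoc)
lemma mm_lscale: "C ** (r *\<^sub>R A) = r *\<^sub>R (C ** (A :: real^'n^'m))"
  by (simp add: matrix_matrix_mult_def vec_eq_iff sum_distrib_left algebra_simps)

lemma bl_transpose: "bounded_linear (transpose :: real^'n^'m \<Rightarrow> real^'m^'n)"
  by (rule linear_conv_bounded_linear[THEN iffD1], rule linearI) (simp_all add: tr_add tr_scaleR)

lemma bl_lmul: "bounded_linear (\<lambda>Y::real^'n^'m. C ** Y)"
  by (rule linear_conv_bounded_linear[THEN iffD1], rule linearI) (simp_all add: matrix_add_ldistrib mm_lscale)

lemma mv_scale: "(r *\<^sub>R M) *v v = r *\<^sub>R (M *v (v::real^'n))"
  by (simp add: matrix_vector_mult_def vec_eq_iff sum_distrib_left mult.assoc)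

lemma bl_quad: "bounded_linear (\<lambda>M::real^'n^'n. v \<bullet> (M *v v))"
  by (rule linear_conv_bounded_linear[THEN iffD1], rule linearI)
     (simp_all add: matrix_vector_mult_add_rdistrib inner_add_right mv_scale)

lemma mv_bound: "norm (A *v x) \<le> real CARD('m) * real CARD('n) * norm A * norm x"
  for A :: "real^'n^'m"
proof -
  have "\<And>i j. \<bar>A $ i $ j\<bar> \<le> norm A"
    by (metis component_le_norm_cart Finite_Cartesian_Product.norm_nth_le order_trans)
  then have "onorm ((*v) A) \<le> real CARD('m) * real CARD('n) * norm A"
    by (rule onorm_le_matrix_component)
  moreover have "norm (A *v x) \<le> onorm ((*v) A) * norm x"
    using onorm [OF matrix_vector_mul_bounded_linear] by blast
  ultimately show ?thesis
    by (meson mult_right_mono norm_ge_zero order_trans)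
qed

lemma norm_le_sum_rows: "norm (x::'a::real_normed_vector^'n) \<le> (\<Sum>i\<in>UNIV. norm (x $ i))"
  unfolding norm_vec_def by (rule L2_set_le_sum) simp

lemma mm_bound: "norm (A ** B) \<le> real CARD('m) * real CARD('n) * real CARD('k) * norm A * norm B"
  for A :: "real^'k^'m" and B :: "real^'n^'k"
proof -
  have e: "\<bar>(A ** B) $ i $ j\<bar> \<le> real CARD('k) * norm A * norm B" for i j
  proof -
    have "\<bar>(A ** B) $ i $ j\<bar> \<le> (\<Sum>k\<in>UNIV. \<bar>A $ i $ k\<bar> * \<bar>B $ k $ j\<bar>)"
      by (simp add: matrix_matrix_mult_def) (metis (no_types, lifting) abs_mult sum.cong sum_abs)
    also have "\<dots> \<le> (\<Sum>k\<in>(UNIV::'k set). norm A * norm B)"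
      apply (rule sum_mono)
      apply (rule mult_mono)
      by (auto intro: order_trans[OF component_le_norm_cart Finite_Cartesian_Product.norm_nth_le])
    finally show ?thesis by simp
  qed
  have "norm (A ** B) \<le> (\<Sum>i\<in>UNIV. norm ((A ** B) $ i))" by (rule norm_le_sum_rows)
  also have "\<dots> \<le> (\<Sum>i\<in>(UNIV::'m set). \<Sum>j\<in>(UNIV::'n set). \<bar>(A ** B) $ i $ j\<bar>)"
    by (rule sum_mono) (rule norm_le_l1_cart)
  also have "\<dots> \<le> (\<Sum>i\<in>(UNIV::'m set). \<Sum>j\<in>(UNIV::'n set). real CARD('k) * norm A * norm B)"
    by (intro sum_mono e)
  finally show ?thesis by (simp add: mult.assoc)
qed



lemma sym_inner: "transpose P = P \<Longrightarrow> v \<bullet> (P *v w) = w \<bullet> (P *v (v::real^'n))"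
  by (metis dot_lmul_matrix inner_commute transpose_matrix_vector)

lemma psd_zero:
  fixes P :: "real^'n^'n"
  assumes sym: "transpose P = P" and pos: "\<And>w. 0 \<le> w \<bullet> (P *v w)" and z: "v \<bullet> (P *v v) = 0"
  shows "P *v v = 0"
proof -
  define w where "w = P *v v"
  define b where "b = w \<bullet> (P *v v)"
  define c where "c = w \<bullet> (P *v w)"
  have c0: "c \<ge> 0" using pos c_def by simp
  have expand: "(v + s *\<^sub>R w) \<bullet> (P *v (v + s *\<^sub>R w)) = 2 * s * b + s^2 * c" for s
  proof -
    have "v \<bullet> (P *v w) = b" using sym_inner[OF sym] b_def by simp
    then show ?thesis
      by (simp add: matrix_vector_right_distrib matrix_vector_mult_scaleR inner_add_left
          inner_add_right z b_def c_def power2_eq_square algebra_simps)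
  qed
  have "b = 0"
  proof (rule ccontr)
    assume "b \<noteq> 0"
    define s where "s = - b / (c + 1)"
    have "0 \<le> 2 * s * b + s^2 * c" using pos expand by metis
    also have "2 * s * b + s^2 * c = b^2 * (c - 2 * (c + 1)) / (c + 1)^2"
    proof -
      have cp: "c + 1 \<noteq> 0" using c0 by simp
      show ?thesis unfolding s_def using cp
        by (simp add: power2_eq_square divide_simps) (simp add: algebra_simps)
    qed
    also have "\<dots> < 0"
      using c0 \<open>b \<noteq> 0\<close> by (intro divide_neg_pos mult_pos_neg) auto
    finally show False by simp
  qed
  then show ?thesis by (simp add: b_def w_def)
qed

lemma psd_unit:
  fixes P :: "real^'n^'n"
  assumes "\<And>w. norm w = 1 \<Longrightarrow> 0 \<le> w \<bullet> (P *v w)"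
  shows "0 \<le> w \<bullet> (P *v w)"
proof (cases "w = 0")
  case False
  define u where "u = (1 / norm w) *\<^sub>R w"
  have "norm u = 1" using False by (simp add: u_def)
  then have "0 \<le> u \<bullet> (P *v u)" by (rule assms)
  also have "u \<bullet> (P *v u) = (1 / norm w)^2 * (w \<bullet> (P *v w))"
    by (simp add: u_def matrix_vector_mult_scaleR power2_eq_square)
  finally show ?thesis using False
    by (simp add: zero_le_mult_iff)
qed simp

lemma quad_expand: "v \<bullet> (M *v v) = (\<Sum>i\<in>UNIV. v $ i * (\<Sum>j\<in>UNIV. M $ i $ j * v $ j))"
  by (simp add: inner_vec_def matrix_vector_mult_def)

lemma quad_bound: "\<bar>(G *v v) \<bullet> v\<bar> \<le> real CARD('n) * real CARD('n) * norm G * norm v * norm v"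
  for G :: "real^'n^'n"
proof -
  have "\<bar>(G *v v) \<bullet> v\<bar> \<le> norm (G *v v) * norm v" by (rule Cauchy_Schwarz_ineq2)
  also have "\<dots> \<le> real CARD('n) * real CARD('n) * norm G * norm v * norm v"
    by (rule mult_right_mono[OF mv_bound]) simp
  finally show ?thesis .
qed



lemma quad_cont:
  fixes M :: "real \<Rightarrow> real^'n^'n"
  assumes "continuous_on S M"
  shows "continuous_on (S \<times> UNIV) (\<lambda>z. snd z \<bullet> (M (fst z) *v snd z))"
proof -
  have "continuous_on (S \<times> UNIV) (\<lambda>z. M (fst z))"
    by (rule continuous_on_compose2[OF assms continuous_on_fst]) auto
  then have "continuous_on (S \<times> UNIV) (\<lambda>z. (\<Sum>i\<in>UNIV. snd z $ i * (\<Sum>j\<in>UNIV. M (fst z) $ i $ j * snd z $ j)))"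
    by (intro continuous_intros continuous_on_component)
  then show ?thesis by (simp add: quad_expand)
qed

lemma psd_preserve:
  fixes M M' G :: "real \<Rightarrow> real^'n^'n"
  assumes der: "\<And>t. t \<ge> 0 \<Longrightarrow> (M has_vector_derivative M' t) (at t within {0..})"
    and sym: "\<And>t. t \<ge> 0 \<Longrightarrow> transpose (M t) = M t"
    and quad: "\<And>t v. t \<ge> 0 \<Longrightarrow> 2 * ((G t *v v) \<bullet> (M t *v v)) \<le> v \<bullet> (M' t *v v)"
    and contG: "continuous_on {0..} G"
    and init: "psd (M 0)"
    and T: "T \<ge> 0"
  shows "0 \<le> v \<bullet> (M T *v v)"
proof -
  have contM: "continuous_on {0..} M"
    by (rule continuous_on_vector_derivative) (use der in auto)
  have "compact (G ` {0..T})"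
    by (rule compact_continuous_image[OF continuous_on_subset[OF contG]]) auto
  then obtain K0 where K0: "\<And>t. t \<in> {0..T} \<Longrightarrow> norm (G t) \<le> K0"
    using compact_imp_bounded bounded_iff by (metis imageI)
  define c where "c = real CARD('n) * real CARD('n)"
  define K where "K = max K0 0"
  define a where "a = 2 * c * K + 1"
  have c0: "c \<ge> 0" by (simp add: c_def)
  have K: "\<And>t. t \<in> {0..T} \<Longrightarrow> norm (G t) \<le> K" "K \<ge> 0"
    using K0 by (force simp: K_def)+
  define p where "p = (\<lambda>\<epsilon> t (w::real^'n). w \<bullet> (M t *v w) + \<epsilon> * exp (a * t))"
  have pcont: "continuous_on ({0..} \<times> UNIV) (\<lambda>z. p \<epsilon> (fst z) (snd z))" for \<epsilon>
    unfolding p_def by (intro continuous_intros quad_cont contM)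
  have claim: "p \<epsilon> t w > 0" if e: "\<epsilon> > 0" and t: "t \<in> {0..T}" and w: "norm w = 1" for \<epsilon> t w
  proof (rule ccontr)
    assume neg: "\<not> p \<epsilon> t w > 0"
    define D where "D = {0..T} \<times> sphere (0::real^'n) 1"
    define Z where "Z = {z \<in> D. p \<epsilon> (fst z) (snd z) \<le> 0}"
    have "closed Z" unfolding Z_def D_def
      by (rule continuous_on_closed_Collect_le[OF continuous_on_subset[OF pcont]])
         (auto intro: closed_Times)
    moreover have "compact D" unfolding D_def by (intro compact_Times) auto
    ultimately have "compact (D \<inter> Z)" by auto
    moreover have "D \<inter> Z = Z" unfolding Z_def by auto
    ultimately have cZ: "compact Z" by simp
    have cfZ: "compact (fst ` Z)"
      by (rule compact_continuous_image[OF continuous_on_fst[OF continuous_on_id] cZ])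
    have "(t, w) \<in> Z" using t w neg by (auto simp: Z_def D_def)
    then have "fst ` Z \<noteq> {}" by blast
    from compact_attains_inf[OF cfZ this] obtain \<tau> where \<tau>Z: "\<tau> \<in> fst ` Z" and \<tau>min: "\<And>s. s \<in> fst ` Z \<Longrightarrow> \<tau> \<le> s"
      by blast
    then obtain v where vZ: "(\<tau>, v) \<in> Z" by force
    then have \<tau>T: "\<tau> \<in> {0..T}" and v1: "norm v = 1" and pv: "p \<epsilon> \<tau> v \<le> 0"
      by (auto simp: Z_def D_def)
    have vv: "v \<bullet> v = 1" using v1 by (simp add: dot_square_norm)
    have before: "p \<epsilon> s u > 0" if "s \<in> {0..T}" "norm u = 1" "s < \<tau>" for s u
    proof (rule ccontr)
      assume "\<not> p \<epsilon> s u > 0"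
      then have "s \<in> fst ` Z" using that by (force simp: Z_def D_def)
      then show False using \<tau>min that by force
    qed
    have \<tau>pos: "\<tau> > 0"
    proof (rule ccontr)
      assume "\<not> \<tau> > 0"
      then have "\<tau> = 0" using \<tau>T by auto
      moreover have "0 \<le> v \<bullet> (M 0 *v v)" using init by (simp add: psd_def)
      ultimately show False using pv e by (simp add: p_def)
    qed
    define E where "E = \<epsilon> * exp (a * \<tau>)"
    have Epos: "E > 0" using e by (simp add: E_def)
    have atau: "p \<epsilon> \<tau> u \<ge> 0" if u: "norm u = 1" for u
    proof -
      have "continuous_on {0..\<tau>} (\<lambda>s. p \<epsilon> s u)"
        unfolding p_def
        by (intro continuous_intros bounded_linear.continuous_on[OF bl_quad]
            continuous_on_subset[OF contM]) auto
      then have lim: "((\<lambda>s. p \<epsilon> s u) \<longlongrightarrow> p \<epsilon> \<tau> u) (at_left \<tau>)"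
        using \<tau>pos by (rule continuous_on_Icc_at_leftD)
      have "eventually (\<lambda>s. s \<in> {0<..<\<tau>}) (at_left \<tau>)"
        using \<tau>pos by (rule eventually_at_left_real)
      then have "eventually (\<lambda>s. 0 \<le> p \<epsilon> s u) (at_left \<tau>)"
        by eventually_elim (use before u \<tau>T in \<open>auto intro: less_imp_le\<close>)
      then show ?thesis
        using tendsto_lowerbound[OF lim] by simp
    qed
    define P where "P = M \<tau> + E *\<^sub>R mat 1"
    have Pw: "u \<bullet> (P *v u) = u \<bullet> (M \<tau> *v u) + E * (u \<bullet> u)" for u
      by (simp add: P_def matrix_vector_mult_add_rdistrib mv_scale inner_add_right)
    have Ppos: "0 \<le> u \<bullet> (P *v u)" for u
    proof (rule psd_unit)
      fix u :: "real^'n" assume "norm u = 1"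
      then show "0 \<le> u \<bullet> (P *v u)"
        using atau[of u] by (simp add: Pw p_def E_def dot_square_norm)
    qed
    have Psym: "transpose P = P"
      using sym[of \<tau>] \<tau>T by (simp add: P_def tr_add tr_scaleR)
    have "v \<bullet> (P *v v) = 0" using Ppos[of v] pv vv by (simp add: Pw p_def E_def)
    then have "P *v v = 0" by (rule psd_zero[OF Psym Ppos])
    then have Mv: "M \<tau> *v v = - E *\<^sub>R v"
      by (simp add: P_def matrix_vector_mult_add_rdistrib mv_scale eq_neg_iff_add_eq_0)
    have pzero: "p \<epsilon> \<tau> v = 0" using Mv vv by (simp add: p_def E_def)
    define d' where "d' = v \<bullet> (M' \<tau> *v v) + \<epsilon> * (a * exp (a * \<tau>))"
    have hd: "((\<lambda>s. p \<epsilon> s v) has_real_derivative d') (at \<tau> within {0..})"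
    proof -
      have "((\<lambda>s. v \<bullet> (M s *v v)) has_vector_derivative v \<bullet> (M' \<tau> *v v)) (at \<tau> within {0..})"
        by (rule bounded_linear.has_vector_derivative[OF bl_quad der]) (use \<tau>pos in simp)
      then have "((\<lambda>s. v \<bullet> (M s *v v)) has_real_derivative v \<bullet> (M' \<tau> *v v)) (at \<tau> within {0..})"
        by (simp add: has_real_derivative_iff_has_vector_derivative)
      then show ?thesis unfolding p_def d'_def
        by (auto intro!: derivative_eq_intros)
    qed
    have "2 * ((G \<tau> *v v) \<bullet> (M \<tau> *v v)) \<le> v \<bullet> (M' \<tau> *v v)" using quad \<tau>pos by simp
    then have q1: "- 2 * E * ((G \<tau> *v v) \<bullet> v) \<le> v \<bullet> (M' \<tau> *v v)" by (simp add: Mv)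
    have "\<bar>(G \<tau> *v v) \<bullet> v\<bar> \<le> c * norm (G \<tau>)" using quad_bound[of "G \<tau>" v] v1 by (simp add: c_def)
    also have "\<dots> \<le> c * K" using K(1)[OF \<tau>T] c0 by (rule mult_left_mono)
    finally have "- 2 * E * ((G \<tau> *v v) \<bullet> v) \<ge> - 2 * E * (c * K)"
      using Epos by (simp add: abs_le_iff)
    with q1 have "d' \<ge> E" unfolding d'_def a_def E_def by (simp add: algebra_simps)
    then have "d' > 0" using Epos by simp
    from has_real_derivative_pos_inc_left[OF hd this] obtain d where d: "d > 0"
      and dd: "\<And>h. h > 0 \<Longrightarrow> \<tau> - h \<in> {0..} \<Longrightarrow> h < d \<Longrightarrow> p \<epsilon> (\<tau> - h) v < p \<epsilon> \<tau> v"
      by blast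
    define h where "h = min (d/2) \<tau>"
    have "p \<epsilon> (\<tau> - h) v < 0" using dd[of h] d \<tau>pos pzero by (simp add: h_def)
    moreover have "p \<epsilon> (\<tau> - h) v > 0"
      using before[of "\<tau> - h" v] d \<tau>pos \<tau>T v1 by (simp add: h_def)
    ultimately show False by simp
  qed
  show ?thesis
  proof (rule psd_unit)
    fix w :: "real^'n" assume w: "norm w = 1"
    show "0 \<le> w \<bullet> (M T *v w)"
    proof (rule ccontr)
      assume "\<not> 0 \<le> w \<bullet> (M T *v w)"
      then have n: "w \<bullet> (M T *v w) < 0" by simp
      define \<epsilon> where "\<epsilon> = - (w \<bullet> (M T *v w)) / (2 * exp (a * T))"
      have ex: "exp (a * T) > 0" by simp
      have "\<epsilon> > 0" unfolding \<epsilon>_def using n ex by (intro divide_pos_pos) auto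
      then have "p \<epsilon> T w > 0" using claim[of \<epsilon> T w] T w by auto
      moreover have "p \<epsilon> T w = (w \<bullet> (M T *v w)) / 2"
        unfolding p_def \<epsilon>_def using ex by (simp add: field_simps)
      ultimately show False using n by simp
    qed
  qed
qed



lemma gronwall_zero:
  fixes f f' :: "real \<Rightarrow> real"
  assumes der: "\<And>t. t \<ge> 0 \<Longrightarrow> (f has_real_derivative f' t) (at t within {0..})"
    and bound: "\<And>t. t \<in> {0..T} \<Longrightarrow> f' t \<le> K * f t"
    and f0: "f 0 = 0" and nonneg: "\<And>t. t \<ge> 0 \<Longrightarrow> f t \<ge> 0"
    and t: "t \<in> {0..T}"
  shows "f t = 0"
proof -
  define g where "g s = - (f s * exp (- K * s))" for s
  have contf: "continuous_on {0..} f"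
    by (rule continuous_on_vector_derivative)
       (use der in \<open>auto simp: has_real_derivative_iff_has_vector_derivative\<close>)
  have "g 0 \<le> g t"
  proof (rule DERIV_nonneg_imp_increasing_open[of 0 t g])
    show "0 \<le> t" using t by simp
    show "continuous_on {0..t} g" unfolding g_def
      by (intro continuous_intros continuous_on_subset[OF contf]) auto
    fix x assume x: "0 < x" "x < t"
    have "(f has_real_derivative f' x) (at x)"
      using der[of x] x at_within_interior[of x "{0..}"] by simp
    then have "(g has_real_derivative exp (- K * x) * (K * f x - f' x)) (at x)"
      unfolding g_def by (auto intro!: derivative_eq_intros simp: algebra_simps)
    moreover have "exp (- K * x) * (K * f x - f' x) \<ge> 0"
      using bound[of x] x t by simp
    ultimately show "\<exists>y. (g has_real_derivative y) (at x) \<and> 0 \<le> y" by blast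
  qed
  then have "f t * exp (- K * t) \<le> 0" by (simp add: g_def f0)
  then have "f t \<le> 0" by (simp add: mult_le_0_iff)
  with nonneg[of t] t show ?thesis by simp
qed

lemma dot_tr: "x \<bullet> (transpose A *v y) = (A *v x) \<bullet> (y::real^'m)"
  for A :: "real^'n^'m"
  by (metis dot_lmul_matrix inner_commute transpose_matrix_vector)

lemma ric_asym:
  "riccati_rhs A B C X - transpose (riccati_rhs A B C X) =
    transpose (A - (B ** transpose B) ** X) ** (X - transpose X) + (X - transpose X) ** (A - (B ** transpose B) ** X)"
  by (simp add: riccati_rhs_def tr_add tr_diff matrix_transpose_mul mm_radd mm_rdiff mm_ldiff
      matrix_add_ldistrib matrix_mul_assoc algebra_simps)

lemma ric_quad:
  assumes "transpose Y = Y"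
  shows "v \<bullet> (riccati_rhs A B C Y *v v) =
    2 * ((A *v v) \<bullet> (Y *v v)) - (transpose B *v (Y *v v)) \<bullet> (transpose B *v (Y *v v)) + (C *v v) \<bullet> (C *v v)"
proof -
  have 1: "v \<bullet> ((transpose A ** Y) *v v) = (A *v v) \<bullet> (Y *v v)"
    by (simp only: matrix_vector_mul_assoc[symmetric] dot_tr)
  have 2: "v \<bullet> ((Y ** A) *v v) = (A *v v) \<bullet> (Y *v v)"
    by (simp only: matrix_vector_mul_assoc[symmetric] sym_inner[OF assms])
  have 3: "v \<bullet> ((Y ** B ** transpose B ** Y) *v v) = (transpose B *v (Y *v v)) \<bullet> (transpose B *v (Y *v v))"
  proof -
    have "v \<bullet> ((Y ** B ** transpose B ** Y) *v v) = v \<bullet> (Y *v (B *v (transpose B *v (Y *v v))))"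
      by (simp only: matrix_vector_mul_assoc[symmetric])
    also have "\<dots> = (B *v (transpose B *v (Y *v v))) \<bullet> (Y *v v)" by (rule sym_inner[OF assms])
    also have "\<dots> = (transpose B *v (Y *v v)) \<bullet> (transpose B *v (Y *v v))"
      by (metis dot_tr inner_commute transpose_transpose)
    finally show ?thesis .
  qed
  have 4: "v \<bullet> ((transpose C ** C) *v v) = (C *v v) \<bullet> (C *v v)"
    by (simp only: matrix_vector_mul_assoc[symmetric] dot_tr)
  show ?thesis
    unfolding riccati_rhs_def
    by (simp add: matrix_vector_mult_add_rdistrib matrix_vector_mult_diff_rdistrib inner_add_right
        inner_diff_right 1 2 3 4)
qed



lemma psd_cs:
  fixes P :: "real^'n^'n"
  assumes sym: "transpose P = P" and pos: "\<And>w. 0 \<le> w \<bullet> (P *v w)"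
  shows "(u \<bullet> (P *v w))^2 \<le> (u \<bullet> (P *v u)) * (w \<bullet> (P *v w))"
proof -
  define a where "a = u \<bullet> (P *v u)"
  define b where "b = u \<bullet> (P *v w)"
  define c where "c = w \<bullet> (P *v w)"
  have a0: "a \<ge> 0" and c0: "c \<ge> 0" using pos by (simp_all add: a_def c_def)
  have expand: "0 \<le> a + 2 * s * b + s^2 * c" for s
  proof -
    have "w \<bullet> (P *v u) = b" using sym_inner[OF sym] b_def by simp
    then have "(u + s *\<^sub>R w) \<bullet> (P *v (u + s *\<^sub>R w)) = a + 2 * s * b + s^2 * c"
      by (simp add: matrix_vector_right_distrib matrix_vector_mult_scaleR inner_add_left
          inner_add_right a_def b_def c_def power2_eq_square algebra_simps)
    then show ?thesis using pos by metis
  qed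
  show ?thesis
  proof (cases "c = 0")
    case True
    have "b = 0"
    proof (rule ccontr)
      assume "b \<noteq> 0"
      have "0 \<le> a + 2 * (- (a + 1) / (2 * b)) * b" using expand[of "- (a + 1) / (2 * b)"] True by simp
      also have "\<dots> = -1" using \<open>b \<noteq> 0\<close> by (simp add: field_simps)
      finally show False by simp
    qed
    then show ?thesis using True by (simp add: a_def b_def c_def)
  next
    case False
    then have cp: "c > 0" using c0 by simp
    have "0 \<le> a + 2 * (- b / c) * b + (- b / c)^2 * c" by (rule expand)
    also have "\<dots> = a - b^2 / c" using cp by (simp add: field_simps power2_eq_square)
    finally have "b^2 / c \<le> a" by simp
    then have "b^2 \<le> a * c" using cp by (simp add: divide_le_eq)
    then show ?thesis by (simp add: a_def b_def c_def mult.commute)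
  qed
qed

lemma X_sym:
  fixes A :: "real^'n^'n" and B :: "real^'b^'n" and C :: "real^'n^'c" and X :: "real \<Rightarrow> real^'n^'n"
  assumes X0: "X 0 = 0"
    and der: "\<And>t. t \<ge> 0 \<Longrightarrow> (X has_vector_derivative riccati_rhs A B C (X t)) (at t within {0..})"
    and T: "T \<ge> 0"
  shows "transpose (X T) = X T"
proof -
  have contX: "continuous_on {0..} X"
    by (rule continuous_on_vector_derivative) (use der in auto)
  define H where "H t = A - (B ** transpose B) ** X t" for t
  have contH: "continuous_on {0..} H"
    unfolding H_def by (intro continuous_intros bounded_linear.continuous_on[OF bl_lmul] contX)
  have contHt: "continuous_on {0..} (\<lambda>t. transpose (H t))"
    by (rule bounded_linear.continuous_on[OF bl_transpose contH])
  have "continuous_on {0..T} (\<lambda>t. norm (H t) + norm (transpose (H t)))"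
    by (intro continuous_intros continuous_on_subset[OF contH] continuous_on_subset[OF contHt]) auto
  then have "compact ((\<lambda>t. norm (H t) + norm (transpose (H t))) ` {0..T})"
    by (rule compact_continuous_image) auto
  then have "bounded ((\<lambda>t. norm (H t) + norm (transpose (H t))) ` {0..T})"
    by (rule compact_imp_bounded)
  then obtain K0 where K0': "\<And>x. x \<in> (\<lambda>t. norm (H t) + norm (transpose (H t))) ` {0..T} \<Longrightarrow> norm x \<le> K0"
    unfolding bounded_iff by blast
  have K0: "norm (H t) + norm (transpose (H t)) \<le> K0" if "t \<in> {0..T}" for t
    using K0'[OF imageI[OF that]] by (simp add: abs_le_iff)
  define c3 where "c3 = real CARD('n) * real CARD('n) * real CARD('n)"
  have c30: "c3 \<ge> 0" by (simp add: c3_def)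
  define Y where "Y t = X t - transpose (X t)" for t
  define Y' where "Y' t = riccati_rhs A B C (X t) - transpose (riccati_rhs A B C (X t))" for t
  have dY: "(Y has_vector_derivative Y' t) (at t within {0..})" if "t \<ge> 0" for t
    unfolding Y_def Y'_def
    by (intro has_vector_derivative_diff der[OF that]
        bounded_linear.has_vector_derivative[OF bl_transpose der[OF that]])
  define f where "f t = Y t \<bullet> Y t" for t
  have df: "(f has_real_derivative 2 * (Y t \<bullet> Y' t)) (at t within {0..})" if "t \<ge> 0" for t
  proof -
    have "((\<lambda>s. Y s \<bullet> Y s) has_vector_derivative (Y t \<bullet> Y' t + Y' t \<bullet> Y t)) (at t within {0..})"
      by (rule bounded_bilinear.has_vector_derivative[OF bounded_bilinear_inner dY[OF that] dY[OF that]])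
    then show ?thesis
      by (simp add: f_def[abs_def] has_real_derivative_iff_has_vector_derivative inner_commute)
  qed
  have bound: "2 * (Y t \<bullet> Y' t) \<le> (2 * c3 * K0) * f t" if t: "t \<in> {0..T}" for t
  proof -
    have eq: "Y' t = transpose (H t) ** Y t + Y t ** H t"
      unfolding Y'_def Y_def H_def by (rule ric_asym)
    have "norm (Y' t) \<le> norm (transpose (H t) ** Y t) + norm (Y t ** H t)"
      unfolding eq by (rule norm_triangle_ineq)
    also have "\<dots> \<le> c3 * norm (transpose (H t)) * norm (Y t) + c3 * norm (Y t) * norm (H t)"
      unfolding c3_def by (intro add_mono mm_bound)
    also have "\<dots> = c3 * (norm (H t) + norm (transpose (H t))) * norm (Y t)"
      by (simp add: algebra_simps)
    also have "\<dots> \<le> c3 * K0 * norm (Y t)"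
      by (rule mult_right_mono[OF mult_left_mono[OF K0[OF t] c30]]) simp
    finally have nY': "norm (Y' t) \<le> c3 * K0 * norm (Y t)" .
    have "Y t \<bullet> Y' t \<le> norm (Y t) * norm (Y' t)" by (rule norm_cauchy_schwarz)
    also have "\<dots> \<le> norm (Y t) * (c3 * K0 * norm (Y t))"
      by (rule mult_left_mono[OF nY']) simp
    also have "\<dots> = c3 * K0 * f t" by (simp add: f_def power2_norm_eq_inner[symmetric] power2_eq_square)
    finally show ?thesis by simp
  qed
  have "f T = 0"
  proof (rule gronwall_zero[where f = f and f' = "\<lambda>t. 2 * (Y t \<bullet> Y' t)" and K = "2 * c3 * K0" and T = T and t = T])
    show "\<And>t. t \<ge> 0 \<Longrightarrow> (f has_real_derivative 2 * (Y t \<bullet> Y' t)) (at t within {0..})"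
      by (rule df)
    show "\<And>t. t \<in> {0..T} \<Longrightarrow> 2 * (Y t \<bullet> Y' t) \<le> 2 * c3 * K0 * f t"
      by (rule bound)
    show "f 0 = 0" by (simp add: f_def Y_def X0 transpose_def vec_eq_iff)
    show "\<And>t. t \<ge> 0 \<Longrightarrow> f t \<ge> 0" by (simp add: f_def)
    show "T \<in> {0..T}" using T by simp
  qed
  then have "Y T = 0" by (simp add: f_def)
  then show ?thesis by (simp add: Y_def)
qed



lemma dot_B: "(B *v u) \<bullet> w = u \<bullet> (transpose B *v (w::real^'m))" for B :: "real^'k^'m"
  by (rule dot_tr[symmetric])

lemma mv_neg: "(- M) *v v = - (M *v (v::real^'n))"
  by (simp add: matrix_vector_mult_def vec_eq_iff sum_negf)

theorem theorem5p2:
  fixes A :: "real^'n^'n" and B :: "real^'b^'n" and C :: "real^'n^'c"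
    and Xinf :: "real^'n^'n" and q :: "nat \<Rightarrow> real^'n" and lam :: "nat \<Rightarrow> real"
    and X :: "real \<Rightarrow> real^'n^'n"
  assumes stab: "stabilizable A B"
    and det: "detectable A C"
    and Xinf_sym: "transpose Xinf = Xinf"
    and Xinf_psd: "psd Xinf"
    and Xinf_ARE: "riccati_rhs A B C Xinf = 0"
    and q_orthonormal: "\<forall>i<CARD('n). \<forall>j<CARD('n). q i \<bullet> q j = (if i = j then 1 else 0)"
    and q_eigen: "\<forall>i<CARD('n). Xinf *v q i = lam i *\<^sub>R q i"
    and lam_sorted: "\<forall>i j. i \<le> j \<and> j < CARD('n) \<longrightarrow> lam j \<le> lam i"
    and X0: "X 0 = 0"
    and X_DRE: "\<forall>t\<ge>0. (X has_vector_derivative riccati_rhs A B C (X t)) (at t within {0..})"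
  shows "\<forall>t\<ge>0. \<forall>i<CARD('n). \<forall>j<CARD('n).
           \<bar>q i \<bullet> (X t *v q j)\<bar> \<le> sqrt (lam i * lam j)"
proof (intro allI impI)
  fix t :: real and i j :: nat
  assume t: "t \<ge> 0" and i: "i < CARD('n)" and j: "j < CARD('n)"
  have der: "\<And>t. t \<ge> 0 \<Longrightarrow> (X has_vector_derivative riccati_rhs A B C (X t)) (at t within {0..})"
    using X_DRE by blast
  have symX: "\<And>s. s \<ge> 0 \<Longrightarrow> transpose (X s) = X s"
    by (rule X_sym[OF X0 der])
  have contX: "continuous_on {0..} X"
    by (rule continuous_on_vector_derivative) (use der in auto)
  define S where "S = B ** transpose B"
  have Sv: "S *v x = B *v (transpose B *v x)" for x by (simp only: S_def matrix_vector_mul_assoc)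
  have psdX: "0 \<le> v \<bullet> (X t *v v)" for v
  proof (rule psd_preserve[where M = X and M' = "\<lambda>s. riccati_rhs A B C (X s)"
        and G = "\<lambda>s. A - (1/2) *\<^sub>R (S ** X s)", OF der symX _ _ _ t])
    show "continuous_on {0..} (\<lambda>s. A - (1/2) *\<^sub>R (S ** X s))"
      by (intro continuous_intros bounded_linear.continuous_on[OF bl_lmul] contX)
    show "psd (X 0)" by (simp add: X0 psd_def)
    fix s :: real and v :: "real^'n" assume s: "s \<ge> 0"
    define w where "w = X s *v v"
    have "(A - (1/2) *\<^sub>R (S ** X s)) *v v = A *v v - (1/2) *\<^sub>R (B *v (transpose B *v w))"
      by (simp only: matrix_vector_mult_diff_rdistrib mv_scale w_def matrix_vector_mul_assoc[symmetric] Sv)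
    then have "2 * (((A - (1/2) *\<^sub>R (S ** X s)) *v v) \<bullet> (X s *v v)) =
        2 * ((A *v v) \<bullet> w) - (transpose B *v w) \<bullet> (transpose B *v w)"
      by (simp add: inner_diff_left dot_B w_def)
    also have "\<dots> \<le> v \<bullet> (riccati_rhs A B C (X s) *v v)"
      using ric_quad[OF symX[OF s], of v A B C] by (simp add: w_def)
    finally show "2 * (((A - (1/2) *\<^sub>R (S ** X s)) *v v) \<bullet> (X s *v v)) \<le> v \<bullet> (riccati_rhs A B C (X s) *v v)" .
  qed
  have psdD: "0 \<le> v \<bullet> ((Xinf - X t) *v v)" for v
  proof (rule psd_preserve[where M = "\<lambda>s. Xinf - X s" and M' = "\<lambda>s. - riccati_rhs A B C (X s)"
        and G = "\<lambda>s. A - (1/2) *\<^sub>R (S ** (Xinf + X s))", OF _ _ _ _ _ t])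
    show "((\<lambda>s. Xinf - X s) has_vector_derivative - riccati_rhs A B C (X s)) (at s within {0..})"
      if "s \<ge> 0" for s
      using has_vector_derivative_diff[OF has_vector_derivative_const der[OF that]] by simp
    show "transpose (Xinf - X s) = Xinf - X s" if "s \<ge> 0" for s
      using symX[OF that] Xinf_sym by (simp add: tr_diff)
    show "continuous_on {0..} (\<lambda>s. A - (1/2) *\<^sub>R (S ** (Xinf + X s)))"
      by (intro continuous_intros bounded_linear.continuous_on[OF bl_lmul] contX)
    show "psd (Xinf - X 0)" using Xinf_psd by (simp add: X0)
    fix s :: real and v :: "real^'n" assume s: "s \<ge> 0"
    define u where "u = Xinf *v v"
    define w where "w = X s *v v"
    define bu where "bu = transpose B *v u"
    define bw where "bw = transpose B *v w"
    have "(A - (1/2) *\<^sub>R (S ** (Xinf + X s))) *v v = A *v v - (1/2) *\<^sub>R (B *v (bu + bw))"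
      by (simp only: matrix_vector_mult_diff_rdistrib matrix_vector_mult_add_rdistrib mv_scale
          u_def w_def bu_def bw_def matrix_vector_mul_assoc[symmetric] Sv matrix_vector_right_distrib)
    moreover have "(Xinf - X s) *v v = u - w"
      by (simp add: u_def w_def matrix_vector_mult_diff_rdistrib)
    ultimately have "2 * (((A - (1/2) *\<^sub>R (S ** (Xinf + X s))) *v v) \<bullet> ((Xinf - X s) *v v)) =
        2 * ((A *v v) \<bullet> (u - w)) - (bu + bw) \<bullet> (bu - bw)"
      by (simp add: inner_diff_left dot_B bu_def bw_def matrix_vector_mult_diff_distrib)
    also have "\<dots> = (2 * ((A *v v) \<bullet> u) - bu \<bullet> bu + (C *v v) \<bullet> (C *v v))
                   - (2 * ((A *v v) \<bullet> w) - bw \<bullet> bw + (C *v v) \<bullet> (C *v v))"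
      by (simp add: inner_diff_right inner_add_left inner_diff_left inner_commute[of bw bu])
    also have "\<dots> = v \<bullet> (riccati_rhs A B C Xinf *v v) - v \<bullet> (riccati_rhs A B C (X s) *v v)"
      using ric_quad[OF Xinf_sym, of v A B C] ric_quad[OF symX[OF s], of v A B C]
      by (simp add: u_def w_def bu_def bw_def)
    also have "\<dots> = v \<bullet> (- riccati_rhs A B C (X s) *v v)"
      by (simp add: Xinf_ARE mv_neg)
    finally show "2 * (((A - (1/2) *\<^sub>R (S ** (Xinf + X s))) *v v) \<bullet> ((Xinf - X s) *v v))
        \<le> v \<bullet> (- riccati_rhs A B C (X s) *v v)" by simp
  qed
  have diag: "q k \<bullet> (X t *v q k) \<le> lam k" "0 \<le> q k \<bullet> (X t *v q k)" if k: "k < CARD('n)" for k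
  proof -
    have "q k \<bullet> (Xinf *v q k) = lam k" using q_eigen q_orthonormal k by simp
    then show "q k \<bullet> (X t *v q k) \<le> lam k"
      using psdD[of "q k"] by (simp add: matrix_vector_mult_diff_rdistrib inner_diff_right)
    show "0 \<le> q k \<bullet> (X t *v q k)" by (rule psdX)
  qed
  have cs: "(q i \<bullet> (X t *v q j))^2 \<le> (q i \<bullet> (X t *v q i)) * (q j \<bullet> (X t *v q j))"
    by (rule psd_cs[OF symX[OF t] psdX])
  also have "\<dots> \<le> lam i * lam j"
    using diag[OF i] diag[OF j] by (intro mult_mono) auto
  finally have "(q i \<bullet> (X t *v q j))^2 \<le> lam i * lam j" .
  then have "sqrt ((q i \<bullet> (X t *v q j))^2) \<le> sqrt (lam i * lam j)"
    by (rule real_sqrt_le_mono)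
  then show "\<bar>q i \<bullet> (X t *v q j)\<bar> \<le> sqrt (lam i * lam j)" by simp
qed

end
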